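(* The map $\mathcal L:\mathcal X_M\to\mathcal X_\Lambda$, $\mathcal L(f)(\theta)=\log f(\theta)$ (with $\log\infty=\infty$), is continuous when both spaces carry $\tau_{AW}$.
   Context: For a probability measure $\nu$ let $f_\nu(\theta)=\int e^{\theta x}\nu(dx)\in(0,\infty]$. For $f:\mathbb R\to[-\infty,\infty]$, $\mathrm{epi}(f)=\{(\theta,b):b\ge f(\theta)\}$. On $\mathbb R^2$ use the box metric $d(x,y)=\max(|x_1-y_1|,|x_2-y_2|)$, $d(x,A)=\inf_{y\in A}d(x,y)$, $\overline B_k=\{x:d(0,x)\le k\}$. The Attouch–Wets topology $\tau_{AW}$ has local base at $f$ given by $V_k(f)=\{g:\sup_{x\in\overline B_k}|d(x,\mathrm{epi}(g))-d(x,\mathrm{epi}(f))|<1/k\}$, $k\in\mathbb N$. $\mathcal X_M$ = lower semicontinuous convex $f:\mathbb R\to(0,\infty]$ with $f(0)<\infty$ for which some probability measure $\nu$ satisfies $f(\theta)=f_\nu(\theta)$ whenever $f(\theta)<\infty$; $\mathcal X_\Lambda=\{\log g:g\in\mathcal X_M\}$. *)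

theory Defs
  imports "HOL-Probability.Probability"
begin

definition mgf :: "real measure \<Rightarrow> real \<Rightarrow> ereal" where
  "mgf \<nu> \<theta> = enn2ereal (\<integral>\<^sup>+ x. ennreal (exp (\<theta> * x)) \<partial>\<nu>)"

definition lsc_fun :: "(real \<Rightarrow> ereal) \<Rightarrow> bool" where
  "lsc_fun f \<longleftrightarrow> (\<forall>x. f x \<le> Liminf (at x) f)"

(* convexity of an extended-real valued function (values never -infinity here) *)
definition convex_efun :: "(real \<Rightarrow> ereal) \<Rightarrow> bool" where
  "convex_efun f \<longleftrightarrow> (\<forall>x y t. 0 \<le> t \<and> t \<le> 1 \<longrightarrow>
      f ((1 - t) * x + t * y) \<le> ereal (1 - t) * f x + ereal t * f y)"

definition XM :: "(real \<Rightarrow> ereal) set" where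
  "XM = {f. lsc_fun f \<and> convex_efun f \<and> (\<forall>\<theta>. 0 < f \<theta>) \<and> f 0 < \<infinity> \<and>
            (\<exists>\<nu>. prob_space \<nu> \<and> sets \<nu> = sets borel \<and>
                 (\<forall>\<theta>. f \<theta> < \<infinity> \<longrightarrow> f \<theta> = mgf \<nu> \<theta>))}"

definition elog :: "ereal \<Rightarrow> ereal" where
  "elog y = (if y = \<infinity> then \<infinity> else ereal (ln (real_of_ereal y)))"

definition Lmap :: "(real \<Rightarrow> ereal) \<Rightarrow> (real \<Rightarrow> ereal)" where
  "Lmap f = (\<lambda>\<theta>. elog (f \<theta>))"

definition XLambda :: "(real \<Rightarrow> ereal) set" where
  "XLambda = Lmap ` XM"

definition epi :: "(real \<Rightarrow> ereal) \<Rightarrow> (real \<times> real) set" where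
  "epi f = {(\<theta>, b). f \<theta> \<le> ereal b}"

definition boxdist :: "real \<times> real \<Rightarrow> real \<times> real \<Rightarrow> real" where
  "boxdist x y = max \<bar>fst x - fst y\<bar> \<bar>snd x - snd y\<bar>"

(* distance to a set, infinity for the empty set *)
definition setdist_box :: "real \<times> real \<Rightarrow> (real \<times> real) set \<Rightarrow> ereal" where
  "setdist_box x A = (INF y\<in>A. ereal (boxdist x y))"

definition boxball :: "real \<Rightarrow> (real \<times> real) set" where
  "boxball k = {x. boxdist (0, 0) x \<le> k}"

definition AW_nbhd :: "nat \<Rightarrow> (real \<Rightarrow> ereal) \<Rightarrow> (real \<Rightarrow> ereal) set" where
  "AW_nbhd k f = {g. (SUP x\<in>boxball (real k).
       \<bar>setdist_box x (epi g) - setdist_box x (epi f)\<bar>) < ereal (1 / real k)}"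

end

theory Submission
  imports Defs
begin

lemma sd_le: "y \<in> A \<Longrightarrow> setdist_box x A \<le> ereal (boxdist x y)"
  unfolding setdist_box_def by (rule INF_lower)

lemma sd_nonneg: "0 \<le> setdist_box x A"
  unfolding setdist_box_def
proof (rule INF_greatest)
  fix y assume "y \<in> A"
  have "0 \<le> boxdist x y" by (simp add: boxdist_def)
  then show "0 \<le> ereal (boxdist x y)" by simp
qed

lemma sd_less: "setdist_box x A < ereal r \<Longrightarrow> \<exists>y\<in>A. boxdist x y < r"
  unfolding setdist_box_def by (auto simp: INF_less_iff)

lemma sd_fin: "y \<in> A \<Longrightarrow> \<exists>a. setdist_box x A = ereal a \<and> 0 \<le> a \<and> a \<le> boxdist x y"
proof -
  assume y: "y \<in> A"
  have "0 \<le> setdist_box x A" "setdist_box x A \<le> ereal (boxdist x y)"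
    using sd_nonneg sd_le[OF y] by auto
  then show ?thesis by (cases "setdist_box x A") auto
qed

lemma sd_self: "x \<in> A \<Longrightarrow> setdist_box x A = 0"
proof -
  assume "x \<in> A"
  then have "setdist_box x A \<le> ereal (boxdist x x)" by (rule sd_le)
  then have "setdist_box x A \<le> 0" by (simp add: boxdist_def zero_ereal_def)
  then show ?thesis using sd_nonneg[of x A] by simp
qed

lemma bd_tri: "boxdist x z \<le> boxdist x y + boxdist y z"
  unfolding boxdist_def by (simp add: max_def abs_if split: if_splits)

lemma bd_sym: "boxdist x y = boxdist y x"
  unfolding boxdist_def by (simp add: abs_minus_commute)

lemma elog_le: "0 < v \<Longrightarrow> (elog v \<le> ereal b) \<longleftrightarrow> v \<le> ereal (exp b)"
proof (cases v)
  case (real r)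
  assume "0 < v"
  then have r: "0 < r" using real by simp
  have "ln r \<le> b \<longleftrightarrow> ln r \<le> ln (exp b)" by simp
  also have "\<dots> \<longleftrightarrow> r \<le> exp b" using r by (subst ln_le_cancel_iff) auto
  finally show ?thesis using real r by (simp add: elog_def)
next
  case PInf then show ?thesis by (simp add: elog_def)
next
  case MInf
  assume "0 < v" then show ?thesis using MInf by simp
qed

lemma XM_pos: "f \<in> XM \<Longrightarrow> 0 < f t"
  unfolding XM_def by auto

lemma XM_0: "f \<in> XM \<Longrightarrow> f 0 = 1"
proof -
  assume "f \<in> XM"
  then obtain \<nu> where nu: "prob_space \<nu>" and eq: "f 0 = mgf \<nu> 0" and "f 0 < \<infinity>"
    unfolding XM_def by blast
  have "mgf \<nu> 0 = enn2ereal (emeasure \<nu> (space \<nu>))"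
    by (simp add: mgf_def)
  also have "\<dots> = 1" using prob_space.emeasure_space_1[OF nu] by (simp add: one_ennreal.rep_eq)
  finally show ?thesis using eq by simp
qed

lemma epi0: "f 0 = 1 \<Longrightarrow> (0, 0) \<in> epi (Lmap f)"
  by (simp add: epi_def Lmap_def elog_def)

lemma ln_diff: fixes a c :: real shows "0 < a \<Longrightarrow> 0 < c \<Longrightarrow> ln c - ln a \<le> (c - a) / a"
proof -
  assume a: "0 < a" and c: "0 < c"
  have "ln c - ln a = ln (c / a)" using a c by (simp add: ln_divide_pos)
  also have "\<dots> \<le> c / a - 1" using a c by (intro ln_le_minus_one) simp
  also have "\<dots> = (c - a) / a" using a by (simp add: field_simps)
  finally show ?thesis .
qed


lemma point:
  fixes f g :: "real \<Rightarrow> ereal" and k m :: nat and \<theta> b R :: real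
  assumes R: "R = 2 * real k + 1"
    and k: "k \<ge> 1" and m: "real m \<ge> 4 * real k * exp R"
    and fpos: "\<forall>t. 0 < f t" and gpos: "\<forall>t. 0 < g t"
    and H: "\<forall>p\<in>epi g. p \<in> boxball (real m) \<longrightarrow> setdist_box p (epi f) < ereal (1 / real m)"
    and y: "(\<theta>, b) \<in> epi (Lmap g)" and bd1: "\<bar>\<theta>\<bar> \<le> R" and bd2: "\<bar>b\<bar> \<le> R"
  shows "\<exists>z\<in>epi (Lmap f). boxdist (\<theta>, b) z \<le> 1 / (2 * real k)"
proof -
  have "elog (g \<theta>) \<le> ereal b" using y by (simp add: epi_def Lmap_def)
  hence "g \<theta> \<le> ereal (exp b)" using elog_le gpos by blast
  hence inepi: "(\<theta>, exp b) \<in> epi g" by (simp add: epi_def)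
  have R0: "0 \<le> R" using R by simp
  have eR1: "1 \<le> exp R" using R0 by simp
  have RR: "R \<le> exp R" using exp_ge_add_one_self[of R] by linarith
  have ebR: "exp b \<le> exp R" using bd2 by simp
  have kpos: "0 < real k" using k by simp
  have "exp R \<le> 4 * real k * exp R" using kpos eR1 k by simp
  hence eRm: "exp R \<le> real m" using m by linarith
  have mpos: "0 < real m" using eRm eR1 by linarith
  have "boxdist (0,0) (\<theta>, exp b) \<le> real m"
    unfolding boxdist_def using bd1 RR eRm ebR by (simp del: exp_le_cancel_iff)
  hence "(\<theta>, exp b) \<in> boxball (real m)" by (simp add: boxball_def)
  hence "setdist_box (\<theta>, exp b) (epi f) < ereal (1 / real m)" using H inepi by blast
  then obtain z0 where z0: "z0 \<in> epi f" and dz0: "boxdist (\<theta>, exp b) z0 < 1 / real m"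
    using sd_less by blast
  obtain \<theta>' c where z0eq: "z0 = (\<theta>', c)" by (cases z0)
  define e where "e = 1 / real m"
  have e0: "0 < e" using mpos by (simp add: e_def)
  have d1: "\<bar>\<theta> - \<theta>'\<bar> < e" and d2: "\<bar>exp b - c\<bar> < e"
    using dz0 by (auto simp: boxdist_def z0eq e_def)
  have eb: "e * exp R \<le> 1 / (4 * real k)"
  proof -
    have "e * exp R = exp R / real m" by (simp add: e_def)
    also have "\<dots> \<le> exp R / (4 * real k * exp R)"
    proof (rule divide_left_mono[OF m])
      show "0 \<le> exp R" by simp
      have "0 < 4 * real k * exp R" using kpos by simp
      then show "0 < real m * (4 * real k * exp R)" by (rule mult_pos_pos[OF mpos])
    qed
    also have "\<dots> = 1 / (4 * real k)" using eR1 by simp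
    finally show ?thesis .
  qed
  have one: "1 \<le> exp b * exp R"
  proof -
    have "exp b * exp R = exp (b + R)" by (simp add: exp_add)
    also have "1 \<le> exp (b + R)" using bd2 by simp
    ultimately show ?thesis by simp
  qed
  have eb4: "e * exp R \<le> 1/4"
  proof -
    have "1 / (4 * real k) \<le> 1/4" using k by (simp add: divide_simps)
    then show ?thesis using eb by linarith
  qed
  have e_le: "e \<le> exp b / 4"
  proof -
    have "e \<le> e * (exp b * exp R)" using mult_left_mono[OF one, of e] e0 by simp
    also have "\<dots> = (e * exp R) * exp b" by simp
    also have "\<dots> \<le> (1/4) * exp b" using eb4 by (intro mult_right_mono) auto
    finally show ?thesis by simp
  qed
  have c34: "3/4 * exp b < c" using d2 e_le by linarith
  have cpos: "0 < c" using c34 exp_gt_zero[of b] by linarith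
  have "f \<theta>' \<le> ereal c" using z0 z0eq by (simp add: epi_def)
  hence "f \<theta>' \<le> ereal (exp (ln c))" using cpos by simp
  hence "elog (f \<theta>') \<le> ereal (ln c)" using elog_le fpos by blast
  hence zin: "(\<theta>', ln c) \<in> epi (Lmap f)" by (simp add: epi_def Lmap_def)
  have ediv: "e / exp b \<le> e * exp R"
  proof -
    have "e / exp b \<le> e * (exp b * exp R) / exp b" using one e0
      by (intro divide_right_mono) auto
    also have "\<dots> = e * exp R" by simp
    finally show ?thesis .
  qed
  have dk: "1 / (4 * real k) \<le> 1 / (2 * real k)" using kpos by (simp add: divide_simps)
  have "\<bar>b - ln c\<bar> \<le> 1 / (2 * real k)"
  proof (cases "exp b \<le> c")
    case True
    have "ln c - ln (exp b) \<le> (c - exp b) / exp b" using cpos by (intro ln_diff) auto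
    also have "\<dots> \<le> e / exp b" using d2 by (intro divide_right_mono) auto
    finally have "ln c - b \<le> e * exp R" using ediv by simp
    moreover have "b \<le> ln c" using ln_le_cancel_iff[of "exp b" c] True cpos by simp
    ultimately show ?thesis using eb dk by linarith
  next
    case False
    have "ln (exp b) - ln c \<le> (exp b - c) / c" using cpos by (intro ln_diff) auto
    also have "\<dots> \<le> e / c" using d2 cpos by (intro divide_right_mono) auto
    also have "\<dots> \<le> e / (3/4 * exp b)" using c34 e0 cpos by (intro divide_left_mono) auto
    also have "\<dots> = 4/3 * (e / exp b)" by simp
    also have "\<dots> \<le> 4/3 * (1 / (4 * real k))" using ediv eb by simp
    also have "\<dots> = 1 / (3 * real k)" by simp
    also have "\<dots> \<le> 1 / (2 * real k)" using kpos by (simp add: divide_simps)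
    finally have "b - ln c \<le> 1 / (2 * real k)" by simp
    moreover have "ln c \<le> b" using ln_le_cancel_iff[of c "exp b"] False cpos by simp
    ultimately show ?thesis by linarith
  qed
  moreover have "\<bar>\<theta> - \<theta>'\<bar> \<le> 1 / (2 * real k)"
  proof -
    have "e \<le> e * exp R" using mult_left_mono[OF eR1, of e] e0 by simp
    then show ?thesis using d1 eb dk by linarith
  qed
  ultimately have "boxdist (\<theta>, b) (\<theta>', ln c) \<le> 1 / (2 * real k)"
    by (simp add: boxdist_def)
  then show ?thesis using zin by blast
qed


lemma transfer:
  fixes f g :: "real \<Rightarrow> ereal" and k m :: nat and R :: real
  assumes R: "R = 2 * real k + 1"
    and k: "k \<ge> 1" and m: "real m \<ge> 4 * real k * exp R"
    and fpos: "\<forall>t. 0 < f t" and gpos: "\<forall>t. 0 < g t"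
    and f0: "f 0 = 1" and g0: "g 0 = 1"
    and H: "\<forall>p\<in>epi g. p \<in> boxball (real m) \<longrightarrow> setdist_box p (epi f) < ereal (1 / real m)"
    and x: "x \<in> boxball (real k)"
  shows "setdist_box x (epi (Lmap f)) \<le> setdist_box x (epi (Lmap g)) + ereal (1 / (2 * real k))"
proof -
  define \<delta> where "\<delta> = 1 / (2 * real k)"
  obtain a where a: "setdist_box x (epi (Lmap g)) = ereal a" "0 \<le> a" "a \<le> boxdist x (0,0)"
    using sd_fin[OF epi0[of g, OF g0]] by blast
  obtain d where d: "setdist_box x (epi (Lmap f)) = ereal d"
    using sd_fin[OF epi0[of f, OF f0]] by blast
  have xk: "\<bar>fst x\<bar> \<le> real k" "\<bar>snd x\<bar> \<le> real k"
    using x by (auto simp: boxball_def boxdist_def)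
  have x0: "boxdist x (0,0) \<le> real k" using xk by (simp add: boxdist_def)
  have main: "d \<le> a + \<delta> + \<eta>" if eta: "0 < \<eta>" "\<eta> < 1" for \<eta>
  proof -
    have "setdist_box x (epi (Lmap g)) < ereal (a + \<eta>)" using a eta by simp
    then obtain y where y: "y \<in> epi (Lmap g)" and dy: "boxdist x y < a + \<eta>"
      using sd_less by blast
    obtain \<theta> b where yeq: "y = (\<theta>, b)" by (cases y)
    have "boxdist x y \<le> real k + 1" using dy a x0 eta by linarith
    hence "\<bar>fst x - \<theta>\<bar> \<le> real k + 1" "\<bar>snd x - b\<bar> \<le> real k + 1"
      by (auto simp: boxdist_def yeq)
    hence b1: "\<bar>\<theta>\<bar> \<le> R" and b2: "\<bar>b\<bar> \<le> R" using xk R by auto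
    obtain z where z: "z \<in> epi (Lmap f)" and dz: "boxdist (\<theta>, b) z \<le> \<delta>"
      using point[OF R k m fpos gpos H y[unfolded yeq] b1 b2] \<delta>_def by blast
    have "ereal d \<le> ereal (boxdist x z)" using sd_le[OF z, of x] d by simp
    hence "d \<le> boxdist x z" by simp
    also have "\<dots> \<le> boxdist x y + boxdist y z" by (rule bd_tri)
    finally show ?thesis using dy dz yeq by simp
  qed
  have "d \<le> a + \<delta>"
  proof (rule field_le_epsilon)
    fix \<epsilon> :: real assume e: "0 < \<epsilon>"
    have "d \<le> a + \<delta> + min \<epsilon> (1/2)" using main[of "min \<epsilon> (1/2)"] e by simp
    then show "d \<le> a + \<delta> + \<epsilon>" by linarith
  qed
  then show ?thesis using a d \<delta>_def by simp
qed

theorem mainTheorem10: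
  shows "(\<forall>f\<in>XM. Lmap f \<in> XLambda) \<and>
         (\<forall>f\<in>XM. \<forall>k::nat. k \<ge> 1 \<longrightarrow>
            (\<exists>m::nat. m \<ge> 1 \<and>
               (\<forall>g\<in>XM. g \<in> AW_nbhd m f \<longrightarrow> Lmap g \<in> AW_nbhd k (Lmap f))))"
proof (intro conjI ballI allI impI)
  fix f assume "f \<in> XM"
  then show "Lmap f \<in> XLambda" unfolding XLambda_def by blast
next
  fix f and k :: nat assume f: "f \<in> XM" and k: "k \<ge> 1"
  define R where "R = 2 * real k + 1"
  define m where "m = nat \<lceil>4 * real k * exp R\<rceil>"
  have m: "real m \<ge> 4 * real k * exp R" unfolding m_def by (rule real_nat_ceiling_ge)
  have "4 \<le> 4 * real k * exp R"
  proof -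
    have "1 \<le> exp R" using R_def by simp
    moreover have "1 \<le> real k" using k by simp
    ultimately have "1 \<le> real k * exp R" using mult_mono[of 1 "real k" 1 "exp R"] by simp
    then show ?thesis by simp
  qed
  hence m1: "m \<ge> 1" using m by linarith
  show "\<exists>m::nat. m \<ge> 1 \<and> (\<forall>g\<in>XM. g \<in> AW_nbhd m f \<longrightarrow> Lmap g \<in> AW_nbhd k (Lmap f))"
  proof (intro exI conjI ballI impI)
    show "m \<ge> 1" by (rule m1)
    fix g assume g: "g \<in> XM" and gn: "g \<in> AW_nbhd m f"
    have fpos: "\<forall>t. 0 < f t" and gpos: "\<forall>t. 0 < g t" using f g XM_pos by auto
    have f0: "f 0 = 1" and g0: "g 0 = 1" using f g XM_0 by auto
    have S: "(SUP x\<in>boxball (real m). \<bar>setdist_box x (epi g) - setdist_box x (epi f)\<bar>) < ereal (1 / real m)"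
      using gn by (simp add: AW_nbhd_def)
    have P: "\<bar>setdist_box p (epi g) - setdist_box p (epi f)\<bar> < ereal (1 / real m)"
      if "p \<in> boxball (real m)" for p
      using SUP_upper[OF that, of "\<lambda>x. \<bar>setdist_box x (epi g) - setdist_box x (epi f)\<bar>"] S
      by (rule order.strict_trans1)
    have H1: "\<forall>p\<in>epi g. p \<in> boxball (real m) \<longrightarrow> setdist_box p (epi f) < ereal (1 / real m)"
    proof (intro ballI impI)
      fix p assume p: "p \<in> epi g" "p \<in> boxball (real m)"
      have "\<bar>0 - setdist_box p (epi f)\<bar> < ereal (1 / real m)" using P[OF p(2)] sd_self[OF p(1)] by simp
      then show "setdist_box p (epi f) < ereal (1 / real m)" using sd_nonneg[of p "epi f"] by simp
    qed
    have H2: "\<forall>p\<in>epi f. p \<in> boxball (real m) \<longrightarrow> setdist_box p (epi g) < ereal (1 / real m)"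
    proof (intro ballI impI)
      fix p assume p: "p \<in> epi f" "p \<in> boxball (real m)"
      have "\<bar>setdist_box p (epi g) - 0\<bar> < ereal (1 / real m)" using P[OF p(2)] sd_self[OF p(1)] by simp
      then show "setdist_box p (epi g) < ereal (1 / real m)" using sd_nonneg[of p "epi g"] by simp
    qed
    have each: "\<bar>setdist_box x (epi (Lmap g)) - setdist_box x (epi (Lmap f))\<bar> \<le> ereal (1 / (2 * real k))"
      if x: "x \<in> boxball (real k)" for x
    proof -
      have t1: "setdist_box x (epi (Lmap f)) \<le> setdist_box x (epi (Lmap g)) + ereal (1 / (2 * real k))"
        by (rule transfer[OF R_def k m fpos gpos f0 g0 H1 x])
      have t2: "setdist_box x (epi (Lmap g)) \<le> setdist_box x (epi (Lmap f)) + ereal (1 / (2 * real k))"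
        by (rule transfer[OF R_def k m gpos fpos g0 f0 H2 x])
      obtain a where a: "setdist_box x (epi (Lmap g)) = ereal a"
        using sd_fin[OF epi0[of g, OF g0]] by blast
      obtain d where d: "setdist_box x (epi (Lmap f)) = ereal d"
        using sd_fin[OF epi0[of f, OF f0]] by blast
      have "d \<le> a + 1 / (2 * real k)" "a \<le> d + 1 / (2 * real k)" using t1 t2 a d by simp_all
      hence "\<bar>a - d\<bar> \<le> 1 / (2 * real k)" by linarith
      then show ?thesis using a d by simp
    qed
    have "(SUP x\<in>boxball (real k). \<bar>setdist_box x (epi (Lmap g)) - setdist_box x (epi (Lmap f))\<bar>)
          \<le> ereal (1 / (2 * real k))"
      by (rule SUP_least) (rule each)
    also have "\<dots> < ereal (1 / real k)" using k by (simp add: divide_simps)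
    finally show "Lmap g \<in> AW_nbhd k (Lmap f)" by (simp add: AW_nbhd_def)
  qed
qed

end
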